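(* Let $k\ge1$ and $K>0$. There is a constant $C$ (depending only on $k$ and $K$) such that for all $n$ and all $B,B'\in M_n(\mathbb C)^{\mathbb N}$ with $B_0=uv^*$, $B'_0=u'v'^*$ for some vectors $u,v,u',v'\in\mathbb C^n$ and $\|B_t\|,\|B'_t\|\le K$ for $0\le t\le k-1$, $$|\Sigma_k(B,B')-\hat\Sigma_k(B,B')|\le Cn^{-1}\quad\text{and}\quad|\Sigma'_k(B,B')-\hat\Sigma'_k(B,B')|\le Cn^{-1}.$$
   Context: Let $\rho\in[0,1]$. $\|\cdot\|$ is the operator norm. $P_k$ is the set of $\pi=(j_1,i_1,\dots,j_k,i_k)\in\{1,\dots,n\}^{2k}$ with convention $i_0=i_k$; $M_\pi(B)=n^{-(k-1)/2}\prod_{t=0}^{k-1}(B_t)_{i_tj_{t+1}}$; $Q_k\subset P_k$ is the set of $\pi$ such that the pairs $(j_t,i_t)$, $1\le t\le k$, are pairwise distinct. $\Sigma_k(B,B')=n^{-k+1}\prod_{t=0}^{k-1}\operatorname{Tr}(B_tB_t'^* )$, $\Sigma'_k(B,B')=\rho^kn^{-k+1}\prod_{t=0}^{k-1}\operatorname{Tr}(B_tB_t'^\intercal)$, $\hat\Sigma_k(B,B')=\sum_{\pi\in Q_k}M_\pi(B)\overline{M_\pi(B')}$, $\hat\Sigma'_k(B,B')=\rho^k\sum_{\pi\in Q_k}M_\pi(B)M_\pi(B')$. *)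

theory Defs
  imports "HOL-Analysis.Analysis"
begin

text \<open>n x n complex matrices are represented as functions nat => nat => complex,
  indices 0..n-1 (entries outside the range are irrelevant); vectors in C^n as
  nat => complex. Sequences of matrices (B_t) are nat => nat => nat => complex,
  with B t i j the (i,j) entry of B_t.\<close>

definition vnorm :: "nat \<Rightarrow> (nat \<Rightarrow> complex) \<Rightarrow> real" where
  "vnorm n x = sqrt (\<Sum>i<n. (cmod (x i))\<^sup>2)"

definition mvmult :: "nat \<Rightarrow> (nat \<Rightarrow> nat \<Rightarrow> complex) \<Rightarrow> (nat \<Rightarrow> complex) \<Rightarrow> (nat \<Rightarrow> complex)" where
  "mvmult n A x = (\<lambda>i. \<Sum>j<n. A i j * x j)"

definition opnorm :: "nat \<Rightarrow> (nat \<Rightarrow> nat \<Rightarrow> complex) \<Rightarrow> real" where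
  "opnorm n A = Sup {vnorm n (mvmult n A x) | x. vnorm n x \<le> 1}"

definition mmult :: "nat \<Rightarrow> (nat \<Rightarrow> nat \<Rightarrow> complex) \<Rightarrow> (nat \<Rightarrow> nat \<Rightarrow> complex) \<Rightarrow> (nat \<Rightarrow> nat \<Rightarrow> complex)" where
  "mmult n A B = (\<lambda>i j. \<Sum>l<n. A i l * B l j)"

definition ctransp :: "(nat \<Rightarrow> nat \<Rightarrow> complex) \<Rightarrow> (nat \<Rightarrow> nat \<Rightarrow> complex)" where
  "ctransp A = (\<lambda>i j. cnj (A j i))"

definition transp :: "(nat \<Rightarrow> nat \<Rightarrow> complex) \<Rightarrow> (nat \<Rightarrow> nat \<Rightarrow> complex)" where
  "transp A = (\<lambda>i j. A j i)"

definition mtrace :: "nat \<Rightarrow> (nat \<Rightarrow> nat \<Rightarrow> complex) \<Rightarrow> complex" where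
  "mtrace n A = (\<Sum>i<n. A i i)"

definition Sigma :: "nat \<Rightarrow> nat \<Rightarrow> (nat \<Rightarrow> nat \<Rightarrow> nat \<Rightarrow> complex) \<Rightarrow> (nat \<Rightarrow> nat \<Rightarrow> nat \<Rightarrow> complex) \<Rightarrow> complex" where
  "Sigma n k B B' = of_real (real n powr (1 - real k)) *
      (\<Prod>t<k. mtrace n (mmult n (B t) (ctransp (B' t))))"

definition Sigma' :: "real \<Rightarrow> nat \<Rightarrow> nat \<Rightarrow> (nat \<Rightarrow> nat \<Rightarrow> nat \<Rightarrow> complex) \<Rightarrow> (nat \<Rightarrow> nat \<Rightarrow> nat \<Rightarrow> complex) \<Rightarrow> complex" where
  "Sigma' \<rho> n k B B' = of_real (\<rho> ^ k) * of_real (real n powr (1 - real k)) *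
      (\<Prod>t<k. mtrace n (mmult n (B t) (transp (B' t))))"

text \<open>A tuple pi = (j_1,i_1,...,j_k,i_k) in {1..n}^{2k} is represented (0-based indices)
  by a pair of functions (j,i) on {1..k} with values in {0..<n}.\<close>
definition Pk :: "nat \<Rightarrow> nat \<Rightarrow> ((nat \<Rightarrow> nat) \<times> (nat \<Rightarrow> nat)) set" where
  "Pk n k = ({1..k} \<rightarrow>\<^sub>E {..<n}) \<times> ({1..k} \<rightarrow>\<^sub>E {..<n})"

definition Qk :: "nat \<Rightarrow> nat \<Rightarrow> ((nat \<Rightarrow> nat) \<times> (nat \<Rightarrow> nat)) set" where
  "Qk n k = {\<pi> \<in> Pk n k. inj_on (\<lambda>t. (fst \<pi> t, snd \<pi> t)) {1..k}}"

definition Mpi :: "nat \<Rightarrow> nat \<Rightarrow> ((nat \<Rightarrow> nat) \<times> (nat \<Rightarrow> nat)) \<Rightarrow> (nat \<Rightarrow> nat \<Rightarrow> nat \<Rightarrow> complex) \<Rightarrow> complex" where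
  "Mpi n k \<pi> B = of_real (real n powr (- (real k - 1) / 2)) *
      (\<Prod>t<k. B t (if t = 0 then snd \<pi> k else snd \<pi> t) (fst \<pi> (t + 1)))"

definition Sigma_hat :: "nat \<Rightarrow> nat \<Rightarrow> (nat \<Rightarrow> nat \<Rightarrow> nat \<Rightarrow> complex) \<Rightarrow> (nat \<Rightarrow> nat \<Rightarrow> nat \<Rightarrow> complex) \<Rightarrow> complex" where
  "Sigma_hat n k B B' = (\<Sum>\<pi>\<in>Qk n k. Mpi n k \<pi> B * cnj (Mpi n k \<pi> B'))"

definition Sigma_hat' :: "real \<Rightarrow> nat \<Rightarrow> nat \<Rightarrow> (nat \<Rightarrow> nat \<Rightarrow> nat \<Rightarrow> complex) \<Rightarrow> (nat \<Rightarrow> nat \<Rightarrow> nat \<Rightarrow> complex) \<Rightarrow> complex" where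
  "Sigma_hat' \<rho> n k B B' = of_real (\<rho> ^ k) * (\<Sum>\<pi>\<in>Qk n k. Mpi n k \<pi> B * Mpi n k \<pi> B')"

end

theory Submission
  imports Defs
begin

lemma vnorm_L2: "vnorm n x = L2_set (\<lambda>i. cmod (x i)) {..<n}"
  by (simp add: vnorm_def L2_set_def)

lemma vnorm_coord: "j < n \<Longrightarrow> cmod (x j) \<le> vnorm n x"
  unfolding vnorm_L2 by (rule member_le_L2_set) auto

lemma opnorm_bdd: "bdd_above {vnorm n (mvmult n A x) | x. vnorm n x \<le> 1}"
proof (rule bdd_aboveI[where M = "\<Sum>i<n. \<Sum>j<n. cmod (A i j)"])
  fix y assume "y \<in> {vnorm n (mvmult n A x) | x. vnorm n x \<le> 1}"
  then obtain x where y: "y = vnorm n (mvmult n A x)" and x: "vnorm n x \<le> 1" by auto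
  have "y \<le> (\<Sum>i<n. \<bar>cmod (mvmult n A x i)\<bar>)"
    unfolding y vnorm_L2 by (rule L2_set_le_sum_abs)
  also have "\<dots> \<le> (\<Sum>i<n. \<Sum>j<n. cmod (A i j))"
  proof (rule sum_mono)
    fix i assume "i \<in> {..<n}"
    have "\<bar>cmod (mvmult n A x i)\<bar> = cmod (\<Sum>j<n. A i j * x j)" by (simp add: mvmult_def)
    also have "\<dots> \<le> (\<Sum>j<n. cmod (A i j * x j))" by (rule norm_sum)
    also have "\<dots> \<le> (\<Sum>j<n. cmod (A i j))"
    proof (rule sum_mono)
      fix j assume "j \<in> {..<n}"
      hence "cmod (x j) \<le> 1" using vnorm_coord[of j n x] x by auto
      thus "cmod (A i j * x j) \<le> cmod (A i j)"
        by (simp add: norm_mult mult_left_le)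
    qed
    finally show "\<bar>cmod (mvmult n A x i)\<bar> \<le> (\<Sum>j<n. cmod (A i j))" .
  qed
  finally show "y \<le> (\<Sum>i<n. \<Sum>j<n. cmod (A i j))" .
qed

lemma opnorm_le: "vnorm n x \<le> 1 \<Longrightarrow> vnorm n (mvmult n A x) \<le> opnorm n A"
  unfolding opnorm_def by (rule cSup_upper[OF _ opnorm_bdd]) auto

lemma col_bound:
  assumes "opnorm n A \<le> K" "c < n" "K > 0"
  shows "(\<Sum>r<n. (cmod (A r c))\<^sup>2) \<le> K\<^sup>2"
proof -
  define x where "x = (\<lambda>j::nat. if j = c then (1::complex) else 0)"
  have "(\<Sum>i<n. (cmod (x i))\<^sup>2) = (\<Sum>i<n. if i = c then 1 else 0)"
    by (rule sum.cong) (auto simp: x_def)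
  hence "vnorm n x = 1" using assms(2) by (simp add: vnorm_def)
  hence "vnorm n (mvmult n A x) \<le> K" using opnorm_le[of n x A] assms(1) by auto
  moreover have "mvmult n A x = (\<lambda>i. A i c)" using assms(2)
    by (simp add: mvmult_def x_def fun_eq_iff if_distrib sum.delta cong: if_cong)
  ultimately have "sqrt (\<Sum>r<n. (cmod (A r c))\<^sup>2) \<le> K" by (simp add: vnorm_def)
  hence "(sqrt (\<Sum>r<n. (cmod (A r c))\<^sup>2))\<^sup>2 \<le> K\<^sup>2"
    by (intro power_mono) (auto intro: sum_nonneg)
  moreover have "0 \<le> (\<Sum>r<n. (cmod (A r c))\<^sup>2)" by (intro sum_nonneg) auto
  ultimately show ?thesis by simp
qed

lemma rank1_bound:
  assumes A: "\<forall>i<n. \<forall>j<n. A i j = u i * cnj (v j)" and "opnorm n A \<le> K" "K > 0"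
  shows "(\<Sum>r<n. \<Sum>c<n. (cmod (A r c))\<^sup>2) \<le> K\<^sup>2"
proof -
  define Su where "Su = (\<Sum>r<n. (cmod (u r))\<^sup>2)"
  define Sv where "Sv = (\<Sum>r<n. (cmod (v r))\<^sup>2)"
  have Su0: "Su \<ge> 0" and Sv0: "Sv \<ge> 0" unfolding Su_def Sv_def by (auto intro: sum_nonneg)
  have L: "(\<Sum>r<n. \<Sum>c<n. (cmod (A r c))\<^sup>2) = Su * Sv"
  proof -
    have "(\<Sum>r<n. \<Sum>c<n. (cmod (A r c))\<^sup>2) = (\<Sum>r<n. \<Sum>c<n. (cmod (u r))\<^sup>2 * (cmod (v c))\<^sup>2)"
      using A by (intro sum.cong) (auto simp: norm_mult power_mult_distrib)
    also have "\<dots> = Su * Sv" by (simp add: Su_def Sv_def sum_product)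
    finally show ?thesis .
  qed
  show ?thesis
  proof (cases "Sv = 0")
    case True thus ?thesis using L by simp
  next
    case False
    hence Svp: "Sv > 0" using Sv0 by auto
    define x where "x = (\<lambda>j. v j / complex_of_real (sqrt Sv))"
    have "vnorm n x = sqrt ((\<Sum>r<n. (cmod (v r))\<^sup>2) / Sv)"
      using Sv0 by (simp add: vnorm_def x_def norm_divide power_divide sum_divide_distrib)
    also have "\<dots> = 1" using Svp by (simp add: Sv_def[symmetric])
    finally have "vnorm n x \<le> 1" by simp
    hence le: "vnorm n (mvmult n A x) \<le> K" using opnorm_le[of n x A] assms(2) by auto
    have "\<And>i. i < n \<Longrightarrow> mvmult n A x i = u i * complex_of_real (sqrt Sv)"
    proof -
      fix i assume "i < n"
      hence "mvmult n A x i = (\<Sum>j<n. u i * (cnj (v j) * v j)) / complex_of_real (sqrt Sv)"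
        using A by (simp add: mvmult_def x_def sum_divide_distrib mult.assoc)
      also have "(\<Sum>j<n. u i * (cnj (v j) * v j)) = u i * complex_of_real Sv"
      proof -
        have "(\<Sum>j<n. u i * (cnj (v j) * v j)) = (\<Sum>j<n. u i * complex_of_real ((cmod (v j))\<^sup>2))"
          by (intro sum.cong refl) (metis complex_norm_square mult.commute)
        thus ?thesis by (simp add: Sv_def sum_distrib_left)
      qed
      also have "u i * complex_of_real Sv / complex_of_real (sqrt Sv) = u i * complex_of_real (sqrt Sv)"
        using Svp by (simp add: field_simps flip: of_real_mult)
      finally show "mvmult n A x i = u i * complex_of_real (sqrt Sv)" .
    qed
    hence "vnorm n (mvmult n A x) = sqrt (\<Sum>i<n. (cmod (u i))\<^sup>2 * Sv)"
      using Svp by (simp add: vnorm_def norm_mult power_mult_distrib)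
    also have "\<dots> = sqrt (Su * Sv)" by (simp add: Su_def sum_distrib_right)
    finally have "sqrt (Su * Sv) \<le> K" using le by simp
    hence "(sqrt (Su * Sv))\<^sup>2 \<le> K\<^sup>2" using Su0 Sv0 by (intro power_mono) auto
    thus ?thesis using L Su0 Sv0 by simp
  qed
qed


lemma prod_two_if:
  fixes a b k :: nat
  assumes "a \<noteq> b" "a < k" "b < k"
  shows "(\<Prod>e<k. if e = a \<or> e = b then g e else (1::real)) = g a * g b"
proof -
  let ?f = "\<lambda>e. if e = a \<or> e = b then g e else (1::real)"
  have "prod ?f {..<k} = ?f a * prod ?f ({..<k}-{a})"
    using assms by (subst prod.remove[of _ a]) auto
  also have "prod ?f ({..<k}-{a}) = ?f b * prod ?f ({..<k}-{a}-{b})"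
    using assms by (subst prod.remove[of _ b]) auto
  also have "prod ?f ({..<k}-{a}-{b}) = 1" by (intro prod.neutral) auto
  finally show ?thesis using assms by simp
qed

lemma pair_bound:
  fixes W :: "nat \<Rightarrow> nat \<times> nat \<Rightarrow> real"
  assumes nonneg: "\<And>e x. 0 \<le> W e x"
    and col: "\<And>e c. e < k \<Longrightarrow> c < n \<Longrightarrow> (\<Sum>r<n. W e (r,c)) \<le> L"
    and tot0: "(\<Sum>x\<in>{..<n}\<times>{..<n}. W 0 x) \<le> L"
    and L0: "0 \<le> L"
    and ab: "a < b" "b < k"
  shows "(\<Sum>p\<in>PiE {..<k} (\<lambda>_. {..<n}\<times>{..<n}). (\<Prod>e<k. W e (p e)) *
            (if snd (p a) = snd (p b) then 1 else 0)) \<le> L\<^sup>2 * (real n * L)^(k-2)"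
proof -
  define S where "S = {..<n}\<times>{..<n}"
  define h where "h c e x = W e x * (if e = a \<or> e = b then (if snd x = c then 1 else 0) else (1::real))" for c e x
  define T where "T e = (\<Sum>x\<in>S. W e x)" for e
  define R where "R e c = (\<Sum>r<n. W e (r,c))" for e c
  have finS: "finite S" by (simp add: S_def)
  have T_nonneg: "0 \<le> T e" for e unfolding T_def by (intro sum_nonneg nonneg)
  have R_nonneg: "0 \<le> R e c" for e c unfolding R_def by (intro sum_nonneg nonneg)
  have step1: "(\<Prod>e<k. W e (p e)) * (if snd (p a) = snd (p b) then 1 else 0) = (\<Sum>c<n. \<Prod>e<k. h c e (p e))"
    if p: "p \<in> PiE {..<k} (\<lambda>_. S)" for p
  proof -
    have "p a \<in> {..<n}\<times>{..<n}" using p ab unfolding S_def by (auto simp: PiE_iff)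
    hence pa: "snd (p a) < n" by (auto simp: mem_Times_iff)
    have "(\<Sum>c<n. \<Prod>e<k. h c e (p e)) = (\<Sum>c<n. (\<Prod>e<k. W e (p e)) *
        (\<Prod>e<k. if e = a \<or> e = b then (if snd (p e) = c then 1 else 0) else (1::real)))"
      unfolding h_def by (simp add: prod.distrib)
    also have "\<dots> = (\<Sum>c<n. (\<Prod>e<k. W e (p e)) *
        ((if snd (p a) = c then 1 else 0) * (if snd (p b) = c then 1 else 0)))"
      using ab by (subst prod_two_if) auto
    also have "\<dots> = (\<Prod>e<k. W e (p e)) * (\<Sum>c<n. if snd (p a) = c then (if snd (p b) = c then 1 else 0) else 0)"
    proof -
      have "(if snd(p a) = c then 1 else 0) * (if snd(p b) = c then 1 else 0) =
        (if snd (p a) = c then (if snd (p b) = c then 1 else 0) else (0::real))" for c by simp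
      thus ?thesis by (simp only: sum_distrib_left)
    qed
    also have "(\<Sum>c<n. if snd (p a) = c then (if snd (p b) = c then 1 else 0) else (0::real)) =
        (if snd (p a) = snd (p b) then 1 else 0)"
      using pa by (simp add: sum.delta')
    finally show ?thesis by simp
  qed
  have "(\<Sum>p\<in>PiE {..<k} (\<lambda>_. {..<n}\<times>{..<n}). (\<Prod>e<k. W e (p e)) *
            (if snd (p a) = snd (p b) then 1 else 0)) = (\<Sum>p\<in>PiE {..<k} (\<lambda>_. S). \<Sum>c<n. \<Prod>e<k. h c e (p e))"
    unfolding S_def[symmetric] by (intro sum.cong refl step1)
  also have "\<dots> = (\<Sum>c<n. \<Sum>p\<in>PiE {..<k} (\<lambda>_. S). \<Prod>e<k. h c e (p e))" by (rule sum.swap)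
  also have "\<dots> = (\<Sum>c<n. \<Prod>e<k. \<Sum>x\<in>S. h c e x)"
    using finS by (subst prod_sum_PiE) auto
  also have "\<dots> \<le> (\<Sum>c<n. L * (R a c * (\<Prod>e\<in>{..<k}-{a,b}. T e)))"
  proof (rule sum_mono)
    fix c assume c: "c \<in> {..<n}"
    have hab: "(\<Sum>x\<in>S. h c e x) = R e c" if "e = a \<or> e = b" for e
    proof -
      have "(\<Sum>x\<in>S. h c e x) = (\<Sum>x\<in>{..<n}\<times>{..<n}. if snd x = c then W e x else 0)"
        unfolding S_def h_def using that by (intro sum.cong) auto
      also have "\<dots> = (\<Sum>r<n. \<Sum>c'<n. if c' = c then W e (r,c') else 0)"
        by (simp add: sum.cartesian_product')
      also have "\<dots> = R e c" using c by (simp add: R_def)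
      finally show ?thesis .
    qed
    have hother: "(\<Sum>x\<in>S. h c e x) = T e" if "\<not> (e = a \<or> e = b)" for e
      unfolding T_def h_def using that by simp
    have "(\<Prod>e<k. \<Sum>x\<in>S. h c e x) = (\<Sum>x\<in>S. h c b x) * (\<Prod>e\<in>{..<k}-{b}. \<Sum>x\<in>S. h c e x)"
      using ab by (subst prod.remove[of _ b]) auto
    also have "(\<Prod>e\<in>{..<k}-{b}. \<Sum>x\<in>S. h c e x) = (\<Sum>x\<in>S. h c a x) * (\<Prod>e\<in>{..<k}-{b}-{a}. \<Sum>x\<in>S. h c e x)"
      using ab by (subst prod.remove[of _ a]) auto
    also have "(\<Prod>e\<in>{..<k}-{b}-{a}. \<Sum>x\<in>S. h c e x) = (\<Prod>e\<in>{..<k}-{a,b}. T e)"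
      by (intro prod.cong) (auto simp: hother)
    finally have eq: "(\<Prod>e<k. \<Sum>x\<in>S. h c e x) = R b c * (R a c * (\<Prod>e\<in>{..<k}-{a,b}. T e))"
      by (simp add: hab)
    have "R b c \<le> L" unfolding R_def using col ab c by auto
    moreover have "0 \<le> R a c * (\<Prod>e\<in>{..<k}-{a,b}. T e)"
      by (intro mult_nonneg_nonneg R_nonneg prod_nonneg T_nonneg)
    ultimately show "(\<Prod>e<k. \<Sum>x\<in>S. h c e x) \<le> L * (R a c * (\<Prod>e\<in>{..<k}-{a,b}. T e))"
      unfolding eq by (intro mult_right_mono) auto
  qed
  also have "\<dots> = L * ((\<Sum>c<n. R a c) * (\<Prod>e\<in>{..<k}-{a,b}. T e))"
    by (simp add: sum_distrib_left sum_distrib_right mult.assoc)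
  also have "(\<Sum>c<n. R a c) = T a"
  proof -
    have "T a = (\<Sum>r<n. \<Sum>c<n. W a (r,c))" by (simp add: T_def S_def sum.cartesian_product')
    also have "\<dots> = (\<Sum>c<n. \<Sum>r<n. W a (r,c))" by (rule sum.swap)
    finally show ?thesis by (simp add: R_def)
  qed
  also have "T a * (\<Prod>e\<in>{..<k}-{a,b}. T e) = (\<Prod>e\<in>{..<k}-{b}. T e)"
  proof -
    have "(\<Prod>e\<in>{..<k}-{b}. T e) = T a * (\<Prod>e\<in>{..<k}-{b}-{a}. T e)"
      using ab by (subst prod.remove[of _ a]) auto
    also have "{..<k}-{b}-{a} = {..<k}-{a,b}" by auto
    finally show ?thesis by simp
  qed
  also have "(\<Prod>e\<in>{..<k}-{b}. T e) \<le> (\<Prod>e\<in>{..<k}-{b}. if e = 0 then L else real n * L)"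
  proof (rule prod_mono)
    fix e assume e: "e \<in> {..<k}-{b}"
    have "T e \<le> (if e = 0 then L else real n * L)"
    proof (cases "e = 0")
      case True thus ?thesis using tot0 by (simp add: T_def S_def)
    next
      case False
      have "T e = (\<Sum>c<n. \<Sum>r<n. W e (r,c))"
      proof -
        have "T e = (\<Sum>r<n. \<Sum>c<n. W e (r,c))" by (simp add: T_def S_def sum.cartesian_product')
        also have "\<dots> = (\<Sum>c<n. \<Sum>r<n. W e (r,c))" by (rule sum.swap)
        finally show ?thesis .
      qed
      also have "\<dots> \<le> (\<Sum>c<n. L)" using col e by (intro sum_mono) auto
      finally show ?thesis using False by simp
    qed
    thus "0 \<le> T e \<and> T e \<le> (if e = 0 then L else real n * L)" using T_nonneg by auto
  qed
  also have "(\<Prod>e\<in>{..<k}-{b}. if e = 0 then L else real n * L) = L * (real n * L)^(k-2)"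
  proof -
    have "(\<Prod>e\<in>{..<k}-{b}. if e = 0 then L else real n * L) =
        L * (\<Prod>e\<in>{..<k}-{b}-{0}. if e = 0 then L else real n * L)"
      using ab by (subst prod.remove[of _ 0]) auto
    also have "(\<Prod>e\<in>{..<k}-{b}-{0}. if e = 0 then L else real n * L) = (\<Prod>e\<in>{..<k}-{b}-{0}. real n * L)"
      by (intro prod.cong) auto
    moreover have "card ({..<k}-{b}-{0}) = k - 2" using ab by (simp add: card_Diff_singleton_if)
    ultimately show ?thesis by simp
  qed
  finally have fin: "(\<And>x y. x \<le> y \<Longrightarrow> L * x \<le> L * y) \<Longrightarrow> (\<Sum>p\<in>PiE {..<k} (\<lambda>_. {..<n}\<times>{..<n}). (\<Prod>e<k. W e (p e)) *
            (if snd (p a) = snd (p b) then 1 else 0)) \<le> L * (L * (real n * L) ^ (k - 2))" .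
  have mono: "\<And>x y. x \<le> y \<Longrightarrow> L * x \<le> L * y" using L0 by (simp add: mult_left_mono)
  show ?thesis using fin[OF mono] by (simp add: power2_eq_square mult.assoc)
qed


definition phi :: "nat \<Rightarrow> ((nat\<Rightarrow>nat)\<times>(nat\<Rightarrow>nat)) \<Rightarrow> nat \<Rightarrow> nat\<times>nat" where
  "phi k \<pi> = (\<lambda>e\<in>{..<k}. ((if e = 0 then snd \<pi> k else snd \<pi> e), fst \<pi> (e+1)))"

definition psi :: "nat \<Rightarrow> (nat \<Rightarrow> nat\<times>nat) \<Rightarrow> ((nat\<Rightarrow>nat)\<times>(nat\<Rightarrow>nat))" where
  "psi k p = ((\<lambda>t\<in>{1..k}. snd (p (t-1))), (\<lambda>t\<in>{1..k}. fst (p (if t = k then 0 else t))))"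

lemma phi_bij:
  assumes "1 \<le> k"
  shows "bij_betw (phi k) (Pk n k) (PiE {..<k} (\<lambda>_. {..<n}\<times>{..<n}))"
proof (rule bij_betw_byWitness[where f' = "psi k"])
  show "\<forall>a\<in>Pk n k. psi k (phi k a) = a"
  proof
    fix a assume a: "a \<in> Pk n k"
    obtain j i where ji: "a = (j,i)" by (cases a)
    have ej: "j \<in> extensional {1..k}" and ei: "i \<in> extensional {1..k}" using a ji by (auto simp: Pk_def PiE_def)
    have "(\<lambda>t\<in>{1..k}. snd (phi k a (t-1))) = j"
    proof
      fix t show "(\<lambda>t\<in>{1..k}. snd (phi k a (t-1))) t = j t"
        using ej ji by (cases "t \<in> {1..k}") (auto simp: phi_def extensional_def)
    qed
    moreover have "(\<lambda>t\<in>{1..k}. fst (phi k a (if t = k then 0 else t))) = i"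
    proof
      fix t show "(\<lambda>t\<in>{1..k}. fst (phi k a (if t = k then 0 else t))) t = i t"
        using ei ji assms by (cases "t \<in> {1..k}") (auto simp: phi_def extensional_def)
    qed
    ultimately show "psi k (phi k a) = a" using ji by (simp add: psi_def)
  qed
  show "\<forall>a'\<in>PiE {..<k} (\<lambda>_. {..<n}\<times>{..<n}). phi k (psi k a') = a'"
  proof
    fix p assume p: "p \<in> PiE {..<k} (\<lambda>_. {..<n}\<times>{..<n})"
    show "phi k (psi k p) = p"
    proof
      fix e show "phi k (psi k p) e = p e"
      proof (cases "e < k")
        case True
        have "snd (psi k p) k = fst (p 0)" using assms by (simp add: psi_def)
        moreover have "e \<noteq> 0 \<Longrightarrow> snd (psi k p) e = fst (p e)" using True by (simp add: psi_def)
        moreover have "fst (psi k p) (e+1) = snd (p e)" using True by (simp add: psi_def)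
        ultimately show ?thesis using True by (cases "e = 0") (simp_all add: phi_def)
      next
        case False
        hence "p e = undefined" using p by (auto simp: PiE_def extensional_def)
        thus ?thesis using False by (simp add: phi_def)
      qed
    qed
  qed
  show "phi k ` Pk n k \<subseteq> PiE {..<k} (\<lambda>_. {..<n}\<times>{..<n})"
  proof
    fix x assume "x \<in> phi k ` Pk n k"
    then obtain j i where ji: "(j,i) \<in> Pk n k" and x: "x = phi k (j,i)" by auto
    have j: "\<And>t. t \<in> {1..k} \<Longrightarrow> j t < n" and i: "\<And>t. t \<in> {1..k} \<Longrightarrow> i t < n"
      using ji by (auto simp: Pk_def PiE_iff)
    show "x \<in> PiE {..<k} (\<lambda>_. {..<n}\<times>{..<n})"
    proof (rule PiE_I)
      fix e assume e: "e \<in> {..<k}"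
      have "(if e = 0 then i k else i e) < n" using i assms e by auto
      moreover have "j (e+1) < n" using j e by auto
      ultimately show "x e \<in> {..<n}\<times>{..<n}" using e by (simp add: x phi_def split: if_splits)
    next
      fix e assume "e \<notin> {..<k}" thus "x e = undefined" by (simp add: x phi_def)
    qed
  qed
  show "psi k ` PiE {..<k} (\<lambda>_. {..<n}\<times>{..<n}) \<subseteq> Pk n k"
  proof
    fix x assume "x \<in> psi k ` PiE {..<k} (\<lambda>_. {..<n}\<times>{..<n})"
    then obtain p where p: "p \<in> PiE {..<k} (\<lambda>_. {..<n}\<times>{..<n})" and x: "x = psi k p" by auto
    have A: "snd (p (t-1)) < n" if "t \<in> {1..k}" for t
    proof -
      have "p (t-1) \<in> {..<n}\<times>{..<n}" using p that by (auto simp: PiE_iff)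
      thus ?thesis by (auto simp: mem_Times_iff)
    qed
    have B: "fst (p (if t = k then 0 else t)) < n" if "t \<in> {1..k}" for t
    proof -
      have "p (if t = k then 0 else t) \<in> {..<n}\<times>{..<n}" using p that assms by (auto simp: PiE_iff)
      thus ?thesis by (auto simp: mem_Times_iff)
    qed
    show "x \<in> Pk n k" using A B by (auto simp: x psi_def Pk_def PiE_iff)
  qed
qed


lemma nonQ_bound:
  fixes W :: "nat \<Rightarrow> nat \<times> nat \<Rightarrow> real"
  assumes nonneg: "\<And>e x. 0 \<le> W e x"
    and col: "\<And>e c. e < k \<Longrightarrow> c < n \<Longrightarrow> (\<Sum>r<n. W e (r,c)) \<le> L"
    and tot0: "(\<Sum>x\<in>{..<n}\<times>{..<n}. W 0 x) \<le> L"
    and L0: "0 \<le> L"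
    and k1: "1 \<le> k"
  shows "(\<Sum>\<pi>\<in>Pk n k - Qk n k. \<Prod>e<k. W e (phi k \<pi> e)) \<le> real (k*k) * (L\<^sup>2 * (real n * L)^(k-2))"
proof -
  define Pairs where "Pairs = {st \<in> {1..k}\<times>{1..k}. fst st < snd st}"
  define F where "F \<pi> = (\<Prod>e<k. W e (phi k \<pi> e))" for \<pi>
  define ind where "ind (\<pi>::(nat\<Rightarrow>nat)\<times>(nat\<Rightarrow>nat)) (st::nat\<times>nat) = (if fst \<pi> (fst st) = fst \<pi> (snd st) then 1 else (0::real))" for \<pi> st
  define Bd where "Bd = L\<^sup>2 * (real n * L)^(k-2)"
  have finP: "finite (Pk n k)" by (simp add: Pk_def finite_PiE)
  have finPairs: "finite Pairs" by (simp add: Pairs_def)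
  have F0: "0 \<le> F \<pi>" for \<pi> unfolding F_def by (intro prod_nonneg) (auto intro: nonneg)
  have ind0: "0 \<le> ind \<pi> st" for \<pi> st by (simp add: ind_def)
  have cardP: "card Pairs \<le> k*k"
  proof -
    have "card Pairs \<le> card ({1..k}\<times>{1..k})" by (rule card_mono) (auto simp: Pairs_def)
    thus ?thesis by (simp add: card_cartesian_product)
  qed
  have one: "1 \<le> (\<Sum>st\<in>Pairs. ind \<pi> st)" if \<pi>: "\<pi> \<in> Pk n k - Qk n k" for \<pi>
  proof -
    have "\<not> inj_on (\<lambda>t. (fst \<pi> t, snd \<pi> t)) {1..k}" using \<pi> by (auto simp: Qk_def)
    then obtain x y where xy: "x \<in> {1..k}" "y \<in> {1..k}" "x \<noteq> y" "fst \<pi> x = fst \<pi> y"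
      unfolding inj_on_def by auto
    define st where "st = (min x y, max x y)"
    have st: "st \<in> Pairs" using xy by (auto simp: st_def Pairs_def min_def max_def)
    have "ind \<pi> st = 1" using xy by (auto simp: ind_def st_def min_def max_def)
    moreover have "ind \<pi> st \<le> (\<Sum>st\<in>Pairs. ind \<pi> st)"
      by (rule member_le_sum[OF st]) (auto intro: ind0 finPairs)
    ultimately show ?thesis by simp
  qed
  have each: "(\<Sum>\<pi>\<in>Pk n k. F \<pi> * ind \<pi> st) \<le> Bd" if st: "st \<in> Pairs" for st
  proof -
    obtain s t where stst: "st = (s,t)" by (cases st)
    have s: "1 \<le> s" "s < t" "t \<le> k" using st stst by (auto simp: Pairs_def)
    have eq: "F \<pi> * ind \<pi> st = (\<lambda>p. (\<Prod>e<k. W e (p e)) * (if snd (p (s-1)) = snd (p (t-1)) then 1 else 0)) (phi k \<pi>)"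
      if "\<pi> \<in> Pk n k" for \<pi>
    proof -
      have "snd (phi k \<pi> (s-1)) = fst \<pi> s" using s by (auto simp: phi_def)
      moreover have "snd (phi k \<pi> (t-1)) = fst \<pi> t" using s by (auto simp: phi_def)
      ultimately show ?thesis by (simp add: F_def ind_def stst)
    qed
    have "(\<Sum>\<pi>\<in>Pk n k. F \<pi> * ind \<pi> st) =
      (\<Sum>\<pi>\<in>Pk n k. (\<lambda>p. (\<Prod>e<k. W e (p e)) * (if snd (p (s-1)) = snd (p (t-1)) then 1 else 0)) (phi k \<pi>))"
      by (intro sum.cong refl eq)
    also have "\<dots> = (\<Sum>p\<in>PiE {..<k} (\<lambda>_. {..<n}\<times>{..<n}). (\<Prod>e<k. W e (p e)) * (if snd (p (s-1)) = snd (p (t-1)) then 1 else 0))"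
      by (rule sum.reindex_bij_betw[OF phi_bij[OF k1]])
    also have "\<dots> \<le> Bd" unfolding Bd_def
      by (rule pair_bound[where W=W and k=k and n=n and L=L, OF nonneg col tot0 L0]) (use s in auto)
    finally show ?thesis .
  qed
  have "(\<Sum>\<pi>\<in>Pk n k - Qk n k. F \<pi>) \<le> (\<Sum>\<pi>\<in>Pk n k - Qk n k. F \<pi> * (\<Sum>st\<in>Pairs. ind \<pi> st))"
  proof (rule sum_mono)
    fix \<pi> assume "\<pi> \<in> Pk n k - Qk n k"
    from one[OF this] show "F \<pi> \<le> F \<pi> * (\<Sum>st\<in>Pairs. ind \<pi> st)"
      using F0[of \<pi>] by (simp add: mult_le_cancel_left1)
  qed
  also have "\<dots> \<le> (\<Sum>\<pi>\<in>Pk n k. F \<pi> * (\<Sum>st\<in>Pairs. ind \<pi> st))"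
    by (rule sum_mono2[OF finP]) (auto intro!: mult_nonneg_nonneg F0 sum_nonneg ind0)
  also have "\<dots> = (\<Sum>st\<in>Pairs. \<Sum>\<pi>\<in>Pk n k. F \<pi> * ind \<pi> st)"
    by (simp add: sum_distrib_left sum.swap[of _ Pairs])
  also have "\<dots> \<le> (\<Sum>st\<in>Pairs. Bd)" by (rule sum_mono) (rule each)
  also have "\<dots> = real (card Pairs) * Bd" by simp
  also have "\<dots> \<le> real (k*k) * Bd"
  proof (rule mult_right_mono)
    show "real (card Pairs) \<le> real (k*k)" using cardP by linarith
    show "0 \<le> Bd" unfolding Bd_def using L0 by simp
  qed
  finally show ?thesis by (simp add: F_def Bd_def)
qed


lemma sumP:
  assumes k1: "1 \<le> k"
  shows "(\<Sum>\<pi>\<in>Pk n k. \<Prod>e<k. G e (phi k \<pi> e)) = (\<Prod>e<k. \<Sum>x\<in>{..<n}\<times>{..<n}. (G e x :: complex))"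
proof -
  have "(\<Prod>e<k. \<Sum>x\<in>{..<n}\<times>{..<n}. G e x) = (\<Sum>p\<in>PiE {..<k} (\<lambda>_. {..<n}\<times>{..<n}). \<Prod>e<k. G e (p e))"
    by (rule prod_sum_PiE) auto
  also have "\<dots> = (\<Sum>\<pi>\<in>Pk n k. \<Prod>e<k. G e (phi k \<pi> e))"
    by (rule sum.reindex_bij_betw[OF phi_bij[OF k1], symmetric])
  finally show ?thesis by simp
qed

lemma Mpi_phi: "Mpi n k \<pi> B = of_real (real n powr (- (real k - 1) / 2)) *
    (\<Prod>e<k. B e (fst (phi k \<pi> e)) (snd (phi k \<pi> e)))"
  unfolding Mpi_def by (simp add: phi_def)

lemma powr_sq: "real n powr (- (real k - 1) / 2) * real n powr (- (real k - 1) / 2) = real n powr (1 - real k)"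
  by (simp add: powr_add[symmetric])

lemma main_bound:
  fixes W :: "nat \<Rightarrow> nat \<times> nat \<Rightarrow> real" and G :: "nat \<Rightarrow> nat \<times> nat \<Rightarrow> complex"
  assumes nonneg: "\<And>e x. 0 \<le> W e x"
    and col: "\<And>e c. e < k \<Longrightarrow> c < n \<Longrightarrow> (\<Sum>r<n. W e (r,c)) \<le> L"
    and tot0: "(\<Sum>x\<in>{..<n}\<times>{..<n}. W 0 x) \<le> L"
    and L0: "0 \<le> L"
    and k1: "1 \<le> k" and n1: "1 \<le> n"
    and GW: "\<And>e x. cmod (G e x) \<le> W e x"
  shows "cmod (of_real (real n powr (1 - real k)) * (\<Sum>\<pi>\<in>Pk n k - Qk n k. \<Prod>e<k. G e (phi k \<pi> e)))
     \<le> real (k*k) * L^k / real n"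
proof (cases "k = 1")
  case True
  have e: "Pk n k - Qk n k = {}" using True by (auto simp: Qk_def)
  show ?thesis unfolding e using L0 by simp
next
  case False
  hence k2: "k \<ge> 2" using k1 by simp
  have np: "real n > 0" using n1 by simp
  have "cmod (of_real (real n powr (1 - real k)) * (\<Sum>\<pi>\<in>Pk n k - Qk n k. \<Prod>e<k. G e (phi k \<pi> e)))
      = real n powr (1 - real k) * cmod (\<Sum>\<pi>\<in>Pk n k - Qk n k. \<Prod>e<k. G e (phi k \<pi> e))"
    by (simp add: norm_mult)
  also have "\<dots> \<le> real n powr (1 - real k) * (\<Sum>\<pi>\<in>Pk n k - Qk n k. \<Prod>e<k. W e (phi k \<pi> e))"
  proof (rule mult_left_mono)
    have "cmod (\<Sum>\<pi>\<in>Pk n k - Qk n k. \<Prod>e<k. G e (phi k \<pi> e)) \<le> (\<Sum>\<pi>\<in>Pk n k - Qk n k. cmod (\<Prod>e<k. G e (phi k \<pi> e)))"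
      by (rule norm_sum)
    also have "\<dots> \<le> (\<Sum>\<pi>\<in>Pk n k - Qk n k. \<Prod>e<k. W e (phi k \<pi> e))"
    proof (rule sum_mono)
      fix \<pi> show "cmod (\<Prod>e<k. G e (phi k \<pi> e)) \<le> (\<Prod>e<k. W e (phi k \<pi> e))"
        unfolding prod_norm[symmetric] by (intro prod_mono) (auto intro: GW)
    qed
    finally show "cmod (\<Sum>\<pi>\<in>Pk n k - Qk n k. \<Prod>e<k. G e (phi k \<pi> e)) \<le> (\<Sum>\<pi>\<in>Pk n k - Qk n k. \<Prod>e<k. W e (phi k \<pi> e))" .
  qed simp
  also have "\<dots> \<le> real n powr (1 - real k) * (real (k*k) * (L\<^sup>2 * (real n * L)^(k-2)))"
    by (rule mult_left_mono[OF nonQ_bound[where W=W and k=k and n=n and L=L, OF nonneg col tot0 L0 k1]]) auto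
  also have "\<dots> = real (k*k) * L^k / real n"
  proof -
    have pw: "real n powr (1 - real k) = 1 / (real n * real n ^ (k-2))"
    proof -
      have "real n powr (1 - real k) = inverse (real n powr (real (k-1)))"
        using k2 np by (simp add: powr_minus[symmetric] of_nat_diff)
      also have "real n powr (real (k-1)) = real n ^ (k-1)" using np by (simp add: powr_realpow)
      also have "real n ^ (k-1) = real n * real n ^ (k-2)"
        using k2 by (metis Suc_diff_Suc Suc_1 diff_Suc_1 less_le_trans lessI power_Suc)
      finally show ?thesis by (simp add: divide_inverse)
    qed
    have Lk: "L^k = L\<^sup>2 * L^(k-2)" using k2 by (metis le_add_diff_inverse power_add)
    show ?thesis unfolding pw Lk using np by (simp add: power_mult_distrib field_simps)
  qed
  finally show ?thesis .
qed


lemma amgm: "(a::real) * b \<le> (a\<^sup>2 + b\<^sup>2) / 2"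
proof -
  have "0 \<le> (a - b)\<^sup>2" by simp
  thus ?thesis by (simp add: power2_eq_square algebra_simps)
qed

lemma sigma_decomp:
  fixes G :: "nat \<Rightarrow> nat \<times> nat \<Rightarrow> complex" and c :: real
  assumes k1: "1 \<le> k"
  and hQ: "\<And>\<pi>. \<pi> \<in> Qk n k \<Longrightarrow> f \<pi> = of_real c * (\<Prod>e<k. G e (phi k \<pi> e))"
  shows "of_real c * (\<Prod>e<k. \<Sum>x\<in>{..<n}\<times>{..<n}. G e x) - (\<Sum>\<pi>\<in>Qk n k. f \<pi>)
     = of_real c * (\<Sum>\<pi>\<in>Pk n k - Qk n k. \<Prod>e<k. G e (phi k \<pi> e))"
proof -
  have finP: "finite (Pk n k)" by (simp add: Pk_def finite_PiE)
  have QP: "Qk n k \<subseteq> Pk n k" by (auto simp: Qk_def)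
  have "(\<Sum>\<pi>\<in>Qk n k. f \<pi>) = of_real c * (\<Sum>\<pi>\<in>Qk n k. \<Prod>e<k. G e (phi k \<pi> e))"
    by (simp add: hQ sum_distrib_left)
  moreover have "(\<Prod>e<k. \<Sum>x\<in>{..<n}\<times>{..<n}. G e x) = (\<Sum>\<pi>\<in>Pk n k. \<Prod>e<k. G e (phi k \<pi> e))"
    by (rule sumP[OF k1, symmetric])
  moreover have "(\<Sum>\<pi>\<in>Pk n k - Qk n k. \<Prod>e<k. G e (phi k \<pi> e)) =
      (\<Sum>\<pi>\<in>Pk n k. \<Prod>e<k. G e (phi k \<pi> e)) - (\<Sum>\<pi>\<in>Qk n k. \<Prod>e<k. G e (phi k \<pi> e))"
    by (rule sum_diff[OF finP QP])
  ultimately show ?thesis by (simp add: right_diff_distrib)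
qed

theorem lemma6p4:
  fixes k :: nat and K :: real
  assumes "k \<ge> 1" and "K > 0"
  shows "\<exists>C::real. \<forall>\<rho>::real. \<forall>n::nat.
    \<forall>B B' :: nat \<Rightarrow> nat \<Rightarrow> nat \<Rightarrow> complex. \<forall>u v u' v' :: nat \<Rightarrow> complex.
      0 \<le> \<rho> \<longrightarrow> \<rho> \<le> 1 \<longrightarrow> n \<ge> 1 \<longrightarrow>
      (\<forall>i<n. \<forall>j<n. B 0 i j = u i * cnj (v j) \<and> B' 0 i j = u' i * cnj (v' j)) \<longrightarrow>
      (\<forall>t<k. opnorm n (B t) \<le> K \<and> opnorm n (B' t) \<le> K) \<longrightarrow>
      cmod (Sigma n k B B' - Sigma_hat n k B B') \<le> C / real n \<and>
      cmod (Sigma' \<rho> n k B B' - Sigma_hat' \<rho> n k B B') \<le> C / real n"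
proof (intro exI[of _ "real (k*k) * (K\<^sup>2)^k"] allI impI)
  fix \<rho> :: real and n :: nat and B B' :: "nat \<Rightarrow> nat \<Rightarrow> nat \<Rightarrow> complex" and u v u' v' :: "nat \<Rightarrow> complex"
  assume \<rho>0: "0 \<le> \<rho>" and \<rho>1: "\<rho> \<le> 1" and n1: "1 \<le> n"
    and rk: "\<forall>i<n. \<forall>j<n. B 0 i j = u i * cnj (v j) \<and> B' 0 i j = u' i * cnj (v' j)"
    and nb: "\<forall>t<k. opnorm n (B t) \<le> K \<and> opnorm n (B' t) \<le> K"
  have k1: "1 \<le> k" using assms by simp
  define L where "L = K\<^sup>2"
  define W where "W e x = cmod (B e (fst x) (snd x)) * cmod (B' e (fst x) (snd x))" for e x
  define c where "c = real n powr (1 - real k)"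
  have L0: "0 \<le> L" by (simp add: L_def)
  have nonneg: "\<And>e x. 0 \<le> W e x" by (simp add: W_def)
  have col: "(\<Sum>r<n. W e (r,c')) \<le> L" if "e < k" "c' < n" for e c'
  proof -
    have "(\<Sum>r<n. W e (r,c')) \<le> (\<Sum>r<n. ((cmod (B e r c'))\<^sup>2 + (cmod (B' e r c'))\<^sup>2) / 2)"
      unfolding W_def by (intro sum_mono) (simp only: fst_conv snd_conv amgm)
    also have "\<dots> = ((\<Sum>r<n. (cmod (B e r c'))\<^sup>2) + (\<Sum>r<n. (cmod (B' e r c'))\<^sup>2)) / 2"
      by (simp only: sum_divide_distrib[symmetric] sum.distrib)
    also have "\<dots> \<le> (K\<^sup>2 + K\<^sup>2) / 2"
      using col_bound[of n "B e" K c'] col_bound[of n "B' e" K c'] nb that assms(2) by auto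
    finally show ?thesis by (simp add: L_def)
  qed
  have tot0: "(\<Sum>x\<in>{..<n}\<times>{..<n}. W 0 x) \<le> L"
  proof -
    have "(\<Sum>x\<in>{..<n}\<times>{..<n}. W 0 x) = (\<Sum>r<n. \<Sum>c'<n. W 0 (r,c'))" by (simp add: sum.cartesian_product')
    also have "\<dots> \<le> (\<Sum>r<n. \<Sum>c'<n. ((cmod (B 0 r c'))\<^sup>2 + (cmod (B' 0 r c'))\<^sup>2) / 2)"
      unfolding W_def by (intro sum_mono) (simp only: fst_conv snd_conv amgm)
    also have "\<dots> = ((\<Sum>r<n. \<Sum>c'<n. (cmod (B 0 r c'))\<^sup>2) + (\<Sum>r<n. \<Sum>c'<n. (cmod (B' 0 r c'))\<^sup>2)) / 2"
      by (simp only: sum_divide_distrib[symmetric] sum.distrib)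
    also have "\<dots> \<le> (K\<^sup>2 + K\<^sup>2) / 2"
    proof -
      have "(\<Sum>r<n. \<Sum>c'<n. (cmod (B 0 r c'))\<^sup>2) \<le> K\<^sup>2"
        by (rule rank1_bound[of n "B 0" u v K]) (use rk nb k1 assms(2) in auto)
      moreover have "(\<Sum>r<n. \<Sum>c'<n. (cmod (B' 0 r c'))\<^sup>2) \<le> K\<^sup>2"
        by (rule rank1_bound[of n "B' 0" u' v' K]) (use rk nb k1 assms(2) in auto)
      ultimately show ?thesis by simp
    qed
    finally show ?thesis by (simp add: L_def)
  qed
  have bnd: "cmod (of_real c * (\<Sum>\<pi>\<in>Pk n k - Qk n k. \<Prod>e<k. G e (phi k \<pi> e))) \<le> real (k*k) * (K\<^sup>2)^k / real n"
    if GW: "\<And>e x. cmod (G e x) \<le> W e x" for G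
    using main_bound[where W=W and G=G and k=k and n=n and L=L, OF nonneg col tot0 L0 k1 n1 GW]
    by (simp add: c_def L_def)
  define G1 where "G1 e x = B e (fst x) (snd x) * cnj (B' e (fst x) (snd x))" for e x
  define G2 where "G2 e x = B e (fst x) (snd x) * B' e (fst x) (snd x)" for e x
  have G1W: "cmod (G1 e x) \<le> W e x" for e x by (simp add: G1_def W_def norm_mult)
  have G2W: "cmod (G2 e x) \<le> W e x" for e x by (simp add: G2_def W_def norm_mult)
  have tr1: "mtrace n (mmult n (B t) (ctransp (B' t))) = (\<Sum>x\<in>{..<n}\<times>{..<n}. G1 t x)" for t
    by (simp add: mtrace_def mmult_def ctransp_def G1_def sum.cartesian_product')
  have tr2: "mtrace n (mmult n (B t) (transp (B' t))) = (\<Sum>x\<in>{..<n}\<times>{..<n}. G2 t x)" for t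
    by (simp add: mtrace_def mmult_def transp_def G2_def sum.cartesian_product')
  have m1: "Mpi n k \<pi> B * cnj (Mpi n k \<pi> B') = of_real c * (\<Prod>e<k. G1 e (phi k \<pi> e))" for \<pi>
  proof -
    have "Mpi n k \<pi> B * cnj (Mpi n k \<pi> B') =
      of_real (real n powr (- (real k - 1) / 2) * real n powr (- (real k - 1) / 2)) *
      ((\<Prod>e<k. B e (fst (phi k \<pi> e)) (snd (phi k \<pi> e))) * (\<Prod>e<k. cnj (B' e (fst (phi k \<pi> e)) (snd (phi k \<pi> e)))))"
      unfolding Mpi_phi by (simp add: algebra_simps)
    thus ?thesis unfolding powr_sq by (simp add: c_def G1_def prod.distrib)
  qed
  have m2: "Mpi n k \<pi> B * Mpi n k \<pi> B' = of_real c * (\<Prod>e<k. G2 e (phi k \<pi> e))" for \<pi>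
  proof -
    have "Mpi n k \<pi> B * Mpi n k \<pi> B' =
      of_real (real n powr (- (real k - 1) / 2) * real n powr (- (real k - 1) / 2)) *
      ((\<Prod>e<k. B e (fst (phi k \<pi> e)) (snd (phi k \<pi> e))) * (\<Prod>e<k. B' e (fst (phi k \<pi> e)) (snd (phi k \<pi> e))))"
      unfolding Mpi_phi by (simp add: algebra_simps)
    thus ?thesis unfolding powr_sq by (simp add: c_def G2_def prod.distrib)
  qed
  have "Sigma n k B B' - Sigma_hat n k B B' = of_real c * (\<Sum>\<pi>\<in>Pk n k - Qk n k. \<Prod>e<k. G1 e (phi k \<pi> e))"
    unfolding Sigma_def Sigma_hat_def tr1 c_def[symmetric]
    by (rule sigma_decomp[OF k1]) (rule m1)
  hence s1: "cmod (Sigma n k B B' - Sigma_hat n k B B') \<le> real (k*k) * (K\<^sup>2)^k / real n"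
    using bnd[OF G1W] by simp
  have "Sigma' \<rho> n k B B' - Sigma_hat' \<rho> n k B B' = of_real (\<rho>^k) *
      (of_real c * (\<Prod>e<k. \<Sum>x\<in>{..<n}\<times>{..<n}. G2 e x) - (\<Sum>\<pi>\<in>Qk n k. Mpi n k \<pi> B * Mpi n k \<pi> B'))"
    unfolding Sigma'_def Sigma_hat'_def tr2 c_def by (simp add: algebra_simps)
  also have "\<dots> = of_real (\<rho>^k) * (of_real c * (\<Sum>\<pi>\<in>Pk n k - Qk n k. \<Prod>e<k. G2 e (phi k \<pi> e)))"
    by (subst sigma_decomp[OF k1]) (auto intro: m2)
  finally have "cmod (Sigma' \<rho> n k B B' - Sigma_hat' \<rho> n k B B') =
      \<rho>^k * cmod (of_real c * (\<Sum>\<pi>\<in>Pk n k - Qk n k. \<Prod>e<k. G2 e (phi k \<pi> e)))"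
    using \<rho>0 by (simp add: norm_mult norm_power)
  also have "\<dots> \<le> 1 * (real (k*k) * (K\<^sup>2)^k / real n)"
    by (rule mult_mono) (use \<rho>0 \<rho>1 bnd[OF G2W] in \<open>auto intro: power_le_one\<close>)
  finally have s2: "cmod (Sigma' \<rho> n k B B' - Sigma_hat' \<rho> n k B B') \<le> real (k*k) * (K\<^sup>2)^k / real n"
    by simp
  show "cmod (Sigma n k B B' - Sigma_hat n k B B') \<le> real (k*k) * (K\<^sup>2)^k / real n \<and>
      cmod (Sigma' \<rho> n k B B' - Sigma_hat' \<rho> n k B B') \<le> real (k*k) * (K\<^sup>2)^k / real n"
    using s1 s2 by simp
qed

end
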